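(* Let $\langle A,f,g\rangle$ be a binary PS-algebra and define $d\colon A\to A$ by $d(a)=f(a,a)+-g(a,a)$. Then $d$ is the unary discriminator on $A$ (i.e. $d(0)=0$ and $d(a)=1$ for all $a\neq0$) if and only if for all $a,b\in A$, $a\cdot b\neq0$ implies $g(a,b)\leq f(a,b)$.
   Context: A PS-algebra is $\langle A,f,g\rangle$ where $A$ is a Boolean algebra with at least two elements (operations $+,\cdot,-,0,1$) and $f,g\colon A^2\to A$ satisfy: $f(x,y)=0$ whenever $x=0$ or $y=0$; $f$ is additive in each argument; $g(x,y)=1$ whenever $x=0$ or $y=0$; $g$ is co-additive in each argument ($g(x+x',y)=g(x,y)\cdot g(x',y)$, $g(x,y+y')=g(x,y)\cdot g(x,y')$). *)

theory Defs
  imports Main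
begin

text \<open>A PS-algebra on a Boolean algebra (type class boolean_algebra, with
 + = sup, \<cdot> = inf, - = uminus, 0 = bot, 1 = top).\<close>

definition ps_algebra :: "('a::boolean_algebra \<Rightarrow> 'a \<Rightarrow> 'a) \<Rightarrow> ('a \<Rightarrow> 'a \<Rightarrow> 'a) \<Rightarrow> bool" where
  "ps_algebra f g \<longleftrightarrow>
     (bot :: 'a) \<noteq> top \<and>
     (\<forall>x y. (x = bot \<or> y = bot) \<longrightarrow> f x y = bot) \<and>
     (\<forall>x x' y. f (sup x x') y = sup (f x y) (f x' y)) \<and>
     (\<forall>x y y'. f x (sup y y') = sup (f x y) (f x y')) \<and>
     (\<forall>x y. (x = bot \<or> y = bot) \<longrightarrow> g x y = top) \<and>
     (\<forall>x x' y. g (sup x x') y = inf (g x y) (g x' y)) \<and>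
     (\<forall>x y y'. g x (sup y y') = inf (g x y) (g x y'))"

definition unary_discriminator :: "('a::boolean_algebra \<Rightarrow> 'a) \<Rightarrow> bool" where
  "unary_discriminator d \<longleftrightarrow> d bot = bot \<and> (\<forall>a. a \<noteq> bot \<longrightarrow> d a = top)"

end

theory Submission
  imports Defs
begin

theorem lemma35:
  fixes f g :: "'a::boolean_algebra \<Rightarrow> 'a \<Rightarrow> 'a"
  assumes "ps_algebra f g"
  shows "unary_discriminator (\<lambda>a. sup (f a a) (- g a a)) \<longleftrightarrow>
         (\<forall>a b. inf a b \<noteq> bot \<longrightarrow> g a b \<le> f a b)"
proof -
  note P = assms[unfolded ps_algebra_def]
  note f0 = P[THEN conjunct2, THEN conjunct1, rule_format]
  note fa1 = P[THEN conjunct2, THEN conjunct2, THEN conjunct1, rule_format]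
  note fa2 = P[THEN conjunct2, THEN conjunct2, THEN conjunct2, THEN conjunct1, rule_format]
  note g0 = P[THEN conjunct2, THEN conjunct2, THEN conjunct2, THEN conjunct2, THEN conjunct1, rule_format]
  note ga1 = P[THEN conjunct2, THEN conjunct2, THEN conjunct2, THEN conjunct2, THEN conjunct2, THEN conjunct1, rule_format]
  note ga2 = P[THEN conjunct2, THEN conjunct2, THEN conjunct2, THEN conjunct2, THEN conjunct2, THEN conjunct2, rule_format]
  have fm1: "f x y \<le> f x' y" if "x \<le> x'" for x x' y
  proof -
    have "f x y \<le> sup (f x y) (f x' y)" by (rule sup.cobounded1)
    also have "\<dots> = f (sup x x') y" by (rule fa1[symmetric])
    also have "sup x x' = x'" using that by (rule sup.absorb2)
    finally show ?thesis .
  qed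
  have fm2: "f x y \<le> f x y'" if "y \<le> y'" for x y y'
  proof -
    have "f x y \<le> sup (f x y) (f x y')" by (rule sup.cobounded1)
    also have "\<dots> = f x (sup y y')" by (rule fa2[symmetric])
    also have "sup y y' = y'" using that by (rule sup.absorb2)
    finally show ?thesis .
  qed
  have gm1: "g x' y \<le> g x y" if "x \<le> x'" for x x' y
  proof -
    have "g x' y = g (sup x x') y" using that by (simp add: sup.absorb2)
    also have "\<dots> = inf (g x y) (g x' y)" by (rule ga1)
    also have "\<dots> \<le> g x y" by (rule inf.cobounded1)
    finally show ?thesis .
  qed
  have gm2: "g x y' \<le> g x y" if "y \<le> y'" for x y y'
  proof -
    have "g x y' = g x (sup y y')" using that by (simp add: sup.absorb2)
    also have "\<dots> = inf (g x y) (g x y')" by (rule ga2)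
    also have "\<dots> \<le> g x y" by (rule inf.cobounded1)
    finally show ?thesis .
  qed
  have d0: "sup (f bot bot) (- g bot bot) = bot" using f0 g0 by simp
  have key: "sup (f a a) (- g a a) = top \<longleftrightarrow> g a a \<le> f a a" for a
  proof
    assume e: "sup (f a a) (- g a a) = top"
    have "g a a = inf (g a a) (sup (f a a) (- g a a))" using e by simp
    also have "\<dots> = inf (g a a) (f a a)" by (simp add: inf_sup_distrib1)
    finally show "g a a \<le> f a a" by (metis inf.cobounded2)
  next
    assume l: "g a a \<le> f a a"
    have "top = sup (g a a) (- g a a)" by simp
    also have "\<dots> \<le> sup (f a a) (- g a a)" using l by (rule sup_mono) simp
    finally show "sup (f a a) (- g a a) = top" by (simp add: top_unique)
  qed
  show ?thesis
  proof
    assume d: "unary_discriminator (\<lambda>a. sup (f a a) (- g a a))"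
    show "\<forall>a b. inf a b \<noteq> bot \<longrightarrow> g a b \<le> f a b"
    proof (intro allI impI)
      fix a b :: 'a assume c: "inf a b \<noteq> bot"
      let ?c = "inf a b"
      have "g ?c ?c \<le> f ?c ?c" using d c key unfolding unary_discriminator_def by blast
      moreover have "g a b \<le> g ?c b" by (rule gm1) simp
      moreover have "g ?c b \<le> g ?c ?c" by (rule gm2) simp
      moreover have "f ?c ?c \<le> f a ?c" by (rule fm1) simp
      moreover have "f a ?c \<le> f a b" by (rule fm2) simp
      ultimately show "g a b \<le> f a b" by (meson order_trans)
    qed
  next
    assume h: "\<forall>a b. inf a b \<noteq> bot \<longrightarrow> g a b \<le> f a b"
    show "unary_discriminator (\<lambda>a. sup (f a a) (- g a a))"
      unfolding unary_discriminator_def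
    proof (intro conjI allI impI)
      show "sup (f bot bot) (- g bot bot) = bot" by (rule d0)
    next
      fix a :: 'a assume "a \<noteq> bot"
      then have "inf a a \<noteq> bot" by simp
      then have "g a a \<le> f a a" using h by blast
      then show "sup (f a a) (- g a a) = top" using key by blast
    qed
  qed
qed

end
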